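(* If a shift space $X\subseteq\mathscr{A}^\infty$ has the $\bar d$-shadowing property and $\sigma(X)=X$, then $X$ is chain mixing.
   Context: Shift spaces are nonempty closed shift-invariant subsets of $\mathscr{A}^\infty=\mathscr{A}^{\mathbb N_0}$ ($\mathscr{A}$ finite, $\sigma$ the left shift); $\mathcal L(X)$, $\mathcal L_n(X)$ denote the words (of length $n$) appearing in $X$. $\bar d(x,y)=\limsup_{n\to\infty}\frac1n|\{0\le j<n:x_j\ne y_j\}|$. $X$ has the $\bar d$-shadowing property if for every $\varepsilon>0$ there is $N$ such that for every sequence $(w^{(j)})_{j\ge1}$ in $\mathcal L(X)$ with $|w^{(j)}|\ge N$ there is $x'\in X$ with $\bar d(w^{(1)}w^{(2)}\cdots,x')<\varepsilon$. The $n$-th Markov approximation $X^M_n$ is the set of $x\in\mathscr{A}^\infty$ all of whose subwords of length $n+1$ are in $\mathcal L_{n+1}(X)$. $X$ is chain mixing if $X^M_n$ is topologically mixing for all but finitely many $n$ (topologically mixing: for all $u,w\in\mathcal L$ there is $N$ such that for each $n\ge N$ some $v$ with $|v|=n$ has $uvw\in\mathcal L$). *)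

theory Defs
  imports "HOL-Analysis.Analysis"
begin

definition shift :: "(nat \<Rightarrow> 'a) \<Rightarrow> (nat \<Rightarrow> 'a)" where
  "shift x = (\<lambda>i. x (Suc i))"

definition shift_space :: "(nat \<Rightarrow> 'a::finite) set \<Rightarrow> bool" where
  "shift_space X \<longleftrightarrow> X \<noteq> {}
     \<and> closedin (product_topology (\<lambda>_. discrete_topology (UNIV :: 'a set)) UNIV) X
     \<and> shift ` X \<subseteq> X"

definition lang :: "(nat \<Rightarrow> 'a) set \<Rightarrow> 'a list set" where
  "lang X = {w. \<exists>x\<in>X. \<exists>i. w = map x [i..<i + length w]}"

definition lang_n :: "(nat \<Rightarrow> 'a) set \<Rightarrow> nat \<Rightarrow> 'a list set" where
  "lang_n X n = {w \<in> lang X. length w = n}"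

definition dbar :: "(nat \<Rightarrow> 'a) \<Rightarrow> (nat \<Rightarrow> 'a) \<Rightarrow> ereal" where
  "dbar x y = limsup (\<lambda>n. ereal (real (card {j. j < n \<and> x j \<noteq> y j}) / real n))"

text \<open>Infinite concatenation w0 w1 w2 ... of a sequence of (nonempty) words.\<close>
definition concat_inf :: "(nat \<Rightarrow> 'a list) \<Rightarrow> nat \<Rightarrow> 'a" where
  "concat_inf ws n =
     (let k = (LEAST k. n < (\<Sum>j\<le>k. length (ws j)))
      in ws k ! (n - (\<Sum>j<k. length (ws j))))"

definition dbar_shadowing :: "(nat \<Rightarrow> 'a) set \<Rightarrow> bool" where
  "dbar_shadowing X \<longleftrightarrow>
     (\<forall>\<epsilon>>0. \<exists>N>0. \<forall>ws :: nat \<Rightarrow> 'a list.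
        (\<forall>j. ws j \<in> lang X \<and> length (ws j) \<ge> N) \<longrightarrow>
        (\<exists>x'\<in>X. dbar (concat_inf ws) x' < ereal \<epsilon>))"

definition markov_approx :: "(nat \<Rightarrow> 'a) set \<Rightarrow> nat \<Rightarrow> (nat \<Rightarrow> 'a) set" where
  "markov_approx X n = {x. \<forall>i. map x [i..<i + (n + 1)] \<in> lang_n X (n + 1)}"

definition top_mixing :: "(nat \<Rightarrow> 'a) set \<Rightarrow> bool" where
  "top_mixing Y \<longleftrightarrow>
     (\<forall>u\<in>lang Y. \<forall>w\<in>lang Y. \<exists>N. \<forall>n\<ge>N. \<exists>v. length v = n \<and> u @ v @ w \<in> lang Y)"

definition chain_mixing :: "(nat \<Rightarrow> 'a) set \<Rightarrow> bool" where
  "chain_mixing X \<longleftrightarrow> (\<exists>n0. \<forall>n\<ge>n0. top_mixing (markov_approx X n))"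

end

theory Submission
  imports Defs
begin

lemma lang_of: "x \<in> X \<Longrightarrow> map x [i..<i+k] \<in> lang X"
  unfolding lang_def by auto

lemma funpow_shift: "(shift^^k) x i = x (i + k)"
  by (induction k arbitrary: i) (auto simp: shift_def)

lemma shift_pow_img: "shift ` X = X \<Longrightarrow> (shift^^k) ` X = X"
proof (induction k)
  case 0 then show ?case by simp
next
  case (Suc k)
  have "(shift^^Suc k) ` X = shift ` ((shift^^k) ` X)"
    by (simp add: image_comp)
  then show ?case using Suc by simp
qed

lemma left_ext:
  assumes "shift ` X = X" "y \<in> X"
  shows "\<exists>z\<in>X. \<forall>i. z (k+i) = y i"
proof -
  have "y \<in> (shift^^k) ` X" using shift_pow_img[OF assms(1)] assms(2) by simp
  then obtain z where "z \<in> X" "y = (shift^^k) z" by auto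
  then show ?thesis by (auto simp: funpow_shift add.commute)
qed

lemma concat_inf_at:
  assumes ne: "\<forall>j. ws j \<noteq> []" and t: "t < length (ws k)"
  shows "concat_inf ws ((\<Sum>j<k. length (ws j)) + t) = ws k ! t"
proof -
  let ?S = "\<lambda>k. (\<Sum>j<k. length (ws j))"
  have mono: "?S a \<le> ?S b" if "a \<le> b" for a b
    by (rule sum_mono2) (use that in auto)
  have "(LEAST k'. ?S k + t < (\<Sum>j\<le>k'. length (ws j))) = k"
  proof (rule Least_equality)
    show "?S k + t < (\<Sum>j\<le>k. length (ws j))"
      using t by (simp add: lessThan_Suc_atMost[symmetric])
  next
    fix y assume "?S k + t < (\<Sum>j\<le>y. length (ws j))"
    then have "?S k + t < ?S (Suc y)" by (simp add: lessThan_Suc_atMost[symmetric])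
    then show "k \<le> y" using mono[of k "Suc y"] mono[of "Suc y" k] by (cases "k \<le> y") auto
  qed
  then show ?thesis unfolding concat_inf_def Let_def by simp
qed

lemma divmod_help: "e < (m::nat) \<Longrightarrow> (q*m+e) div m = q \<and> (q*m+e) mod m = e"
proof -
  assume em: "e < m"
  then have m0: "m \<noteq> 0" by simp
  have "(q*m+e) div m = (e + q*m) div m" by (simp add: add.commute)
  also have "\<dots> = q + e div m" using m0 by (rule div_mult_self1)
  finally have 1: "(q*m+e) div m = q" using em by simp
  have "(q*m+e) mod m = (e + q*m) mod m" by (simp add: add.commute)
  also have "\<dots> = e mod m" by simp
  finally show ?thesis using 1 em by simp
qed

lemma count_lemma:
  fixes c x' :: "nat \<Rightarrow> 'a" and off :: "nat \<Rightarrow> nat"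
  assumes KL: "K*(n+1) \<le> L" and offL: "\<forall>q. off q + L \<le> m"
    and mis: "\<forall>q i. i < K \<longrightarrow> (\<exists>d\<le>n. c(q*m + off q + i*(n+1) + d) \<noteq> x'(q*m + off q + i*(n+1)+d))"
  shows "Q*K \<le> card {j. j < Q*m \<and> c j \<noteq> x' j}"
proof -
  from mis obtain d where d: "\<And>q i. i < K \<Longrightarrow> d q i \<le> n \<and> c(q*m + off q + i*(n+1) + d q i) \<noteq> x'(q*m + off q + i*(n+1)+ d q i)"
    by metis
  define g where "g = (\<lambda>(q,i). q*m + (off q + i*(n+1) + d q i))"
  have e_lt: "off q + i*(n+1) + d q i < m" if "i < K" for q i
  proof -
    have "d q i \<le> n" using d[OF that] by blast
    then have "i*(n+1) + d q i < (i+1)*(n+1)" by simp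
    also have "(i+1)*(n+1) \<le> K*(n+1)" using that by (intro mult_right_mono) auto
    finally show ?thesis using KL offL[rule_format, of q] by linarith
  qed
  have gdiv: "g (q,i) div m = q" and gmod: "g (q,i) mod m = off q + i*(n+1) + d q i" if "i < K" for q i
    using divmod_help[OF e_lt[OF that]] by (auto simp: g_def)
  have inj: "inj_on g ({..<Q} \<times> {..<K})"
  proof (rule inj_onI)
    fix a b assume a: "a \<in> {..<Q} \<times> {..<K}" and b: "b \<in> {..<Q} \<times> {..<K}" and eq: "g a = g b"
    obtain q i where qi: "a = (q,i)" "i < K" using a by auto
    obtain q' i' where qi': "b = (q',i')" "i' < K" using b by auto
    have "q = q'" using gdiv[OF qi(2), of q] gdiv[OF qi'(2), of q'] eq qi qi' by simp
    then have "i*(n+1) + d q i = i'*(n+1) + d q i'"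
      using gmod[OF qi(2), of q] gmod[OF qi'(2), of q'] eq qi qi' by simp
    moreover have "d q i < n+1" "d q i' < n+1" using d[OF qi(2), of q] d[OF qi'(2), of q] by auto
    ultimately have "i = i'" using divmod_help[of "d q i" "n+1" i] divmod_help[of "d q i'" "n+1" i'] by metis
    then show "a = b" using qi qi' \<open>q = q'\<close> by simp
  qed
  have sub: "g ` ({..<Q} \<times> {..<K}) \<subseteq> {j. j < Q*m \<and> c j \<noteq> x' j}"
  proof
    fix j assume "j \<in> g ` ({..<Q} \<times> {..<K})"
    then obtain q i where qi: "q < Q" "i < K" "j = g (q,i)" by auto
    have "j < q*m + m" using e_lt[OF qi(2), of q] qi(3) by (simp add: g_def)
    also have "q*m + m \<le> Q*m" using qi(1)
      by (metis Suc_leI mult_Suc mult_le_mono1 add.commute)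
    finally show "j \<in> {j. j < Q*m \<and> c j \<noteq> x' j}"
      using d[OF qi(2), of q] qi(3) by (simp add: g_def add.assoc)
  qed
  have "Q*K = card ({..<Q} \<times> {..<K})" by (simp add: card_cartesian_product)
  also have "\<dots> \<le> card {j. j < Q*m \<and> c j \<noteq> x' j}"
    by (rule card_inj_on_le[OF inj sub]) auto
  finally show ?thesis .
qed

lemma map_shift_eq:
  assumes "\<And>t. t < k \<Longrightarrow> f (s+t) = g (s'+t)"
  shows "map f [s..<s+k] = map g [s'..<s'+k]"
  by (rule nth_equalityI) (auto simp: assms)

lemma lang_obtain:
  assumes "w \<in> lang X"
  obtains x i where "x \<in> X" "w = map x [i..<i+length w]"
  using assms unfolding lang_def by blast

lemma density_bound:
  fixes c x' :: "nat \<Rightarrow> 'a"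
  assumes cnt: "\<forall>Q. Q*K \<le> card {j. j < Q*m \<and> c j \<noteq> x' j}" and m: "m > 0"
  shows "ereal (real K / real (2*m)) \<le> dbar c x'"
proof -
  have "\<forall>\<^sub>F T in sequentially. ereal (real K / real (2*m)) \<le> ereal (real (card {j. j < T \<and> c j \<noteq> x' j}) / real T)"
    unfolding eventually_sequentially
  proof (intro exI allI impI)
    fix T assume Tm: "m \<le> T"
    define Q where "Q = T div m"
    define C where "C = card {j. j < T \<and> c j \<noteq> x' j}"
    have Q1: "Q \<ge> 1" using Tm m div_le_mono[OF Tm, of m] unfolding Q_def by simp
    have dm: "Q*m + T mod m = T" unfolding Q_def by (rule div_mult_mod_eq)
    have "T mod m < m" using m by simp
    then have TQ: "T \<le> 2*(Q*m)" using dm Q1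
      by (metis add_le_mono le_add2 less_or_eq_imp_le mult.commute mult_2 mult_le_mono1 mult_1 order.trans)
    have QT: "Q*m \<le> T" using dm by linarith
    have "Q*K \<le> card {j. j < Q*m \<and> c j \<noteq> x' j}" using cnt by blast
    also have "\<dots> \<le> C" unfolding C_def by (rule card_mono) (use QT in auto)
    finally have QKC: "Q*K \<le> C" .
    have "K*T \<le> K*(2*(Q*m))" using TQ by simp
    also have "\<dots> = (2*m)*(Q*K)" by simp
    also have "\<dots> \<le> (2*m)*C" using QKC by simp
    finally have nat_ineq: "K*T \<le> C*(2*m)" by (simp add: mult.commute)
    then have "real K * real T \<le> real C * real (2*m)" by (metis of_nat_mono of_nat_mult)
    moreover have "T > 0" using Tm m by simp
    ultimately have "real K / real (2*m) \<le> real C / real T"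
      using m by (simp add: field_simps)
    then show "ereal (real K / real (2*m)) \<le> ereal (real C / real T)" by simp
  qed
  then have "ereal (real K / real (2*m)) \<le> limsup (\<lambda>T. ereal (real (card {j. j < T \<and> c j \<noteq> x' j}) / real T))"
    by (intro le_Limsup) auto
  then show ?thesis unfolding dbar_def .
qed

lemma path_lemma:
  fixes X :: "(nat \<Rightarrow> 'a) set"
  assumes sh: "dbar_shadowing X" and surj: "shift ` X = X" and ne: "X \<noteq> {}"
    and a: "a \<in> lang X" "length a = n+1" and b: "b \<in> lang X" "length b = n+1"
  shows "\<exists>M. \<forall>m\<ge>M. \<exists>f. (\<forall>s. s+n < m \<longrightarrow> map f [s..<s+(n+1)] \<in> lang X)
            \<and> (\<forall>t\<le>n. f t = a!t) \<and> (\<forall>t\<le>n. f (m-(n+1)+t) = b!t)"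
proof -
  define \<epsilon> :: real where "\<epsilon> = 1/(16*(n+1))"
  have "\<epsilon> > 0" unfolding \<epsilon>_def by simp
  with sh obtain N where N0: "N > 0" and Nsh: "\<And>ws :: nat \<Rightarrow> 'a list.
        (\<forall>j. ws j \<in> lang X \<and> length (ws j) \<ge> N) \<Longrightarrow>
        (\<exists>x'\<in>X. dbar (concat_inf ws) x' < ereal \<epsilon>)"
    unfolding dbar_shadowing_def by blast
  obtain xa ia where xa: "xa \<in> X" "a = map xa [ia..<ia+(n+1)]" using lang_obtain[OF a(1)] a(2) by metis
  obtain yb ib where yb: "yb \<in> X" "b = map yb [ib..<ib+(n+1)]" using lang_obtain[OF b(1)] b(2) by metis
  obtain x0 where x0: "x0 \<in> X" using ne by blast
  show ?thesis
  proof (rule exI[of _ "3*(N+2*n+2)"], intro allI impI)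
    fix m assume mM: "3*(N+2*n+2) \<le> m"
    define L where "L = m div 3"
    define r where "r = m - 2*L"
    have dm3: "3*L + m mod 3 = m" "m mod 3 < 3" unfolding L_def by simp_all
    have LN: "L \<ge> N + 2*n + 2"
    proof (rule ccontr)
      assume "\<not> L \<ge> N + 2*n + 2"
      then have "L + 1 \<le> N + 2*n + 2" by simp
      then have "3*(L+1) \<le> 3*(N + 2*n + 2)" by (rule mult_le_mono2)
      then have A: "3*L+3 \<le> m" using mM by simp
      have "m mod 3 \<le> 2" using dm3(2) by simp
      then have "m \<le> 3*L+2" using dm3(1) by linarith
      then show False using A by simp
    qed
    have mLr: "m = 2*L + r" and rL: "L \<le> r" and m3: "m \<le> 3*L + 2" using dm3 unfolding r_def by linarith+
    obtain zb where zb: "zb \<in> X" "\<forall>i. zb (L+i) = yb i" using left_ext[OF surj yb(1)] by blast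
    define iv where "iv = ib + (n+1)"
    define ws where "ws = (\<lambda>j::nat. if j mod 3 = 0 then map xa [ia..<ia+L] else if j mod 3 = 1 then map x0 [0..<0+r] else map zb [iv..<iv+L])"
    have ws_ok: "\<forall>j. ws j \<in> lang X \<and> length (ws j) \<ge> N"
      unfolding ws_def using lang_of[OF xa(1)] lang_of[OF x0, of 0 r, simplified] lang_of[OF zb(1)] LN rL by auto
    then obtain x' where x': "x' \<in> X" "dbar (concat_inf ws) x' < ereal \<epsilon>" using Nsh by blast
    define c where "c = concat_inf ws"
    have wsne: "\<forall>j. ws j \<noteq> []" using ws_ok N0 by (metis le_zero_eq list.size(3) not_gr0)
    have md1: "Suc (3*q) mod 3 = 1" and md2: "Suc (Suc (3*q)) mod 3 = 2" for q by presburger+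
    have len0: "length (ws (3*q)) = L" for q unfolding ws_def using md2 by simp
    have len1: "length (ws (Suc (3*q))) = r" for q unfolding ws_def using md1 by simp
    have len2: "length (ws (Suc (Suc (3*q)))) = L" for q unfolding ws_def using md2 by simp
    have sumq: "(\<Sum>j<3*q. length (ws j)) = q*m" for q
    proof (induction q)
      case 0 then show ?case by simp
    next
      case (Suc q)
      have e: "3 * Suc q = Suc (Suc (Suc (3*q)))" by simp
      have "(\<Sum>j<3 * Suc q. length (ws j)) = (\<Sum>j<Suc (Suc (Suc (3*q))). length (ws j))" by (simp only: e)
      also have "\<dots> = (\<Sum>j<3*q. length (ws j)) + length (ws (3*q)) + length (ws (Suc (3*q))) + length (ws (Suc (Suc (3*q))))"
        by (simp only: sum.lessThan_Suc)
      also have "\<dots> = Suc q * m" using Suc len0[of q] len1[of q] len2[of q] mLr by simp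
      finally show ?case .
    qed
    have cU: "c (q*m + t) = xa (ia + t)" if "t < L" for q t
    proof -
      have "c (q*m + t) = ws (3*q) ! t" unfolding c_def
        using concat_inf_at[OF wsne, of t "3*q"] that len0 sumq by simp
      also have "\<dots> = xa (ia+t)" unfolding ws_def using that by simp
      finally show ?thesis .
    qed
    have cV: "c (q*m + (L+r) + t) = zb (iv + t)" if "t < L" for q t
    proof -
      have s2: "(\<Sum>j<Suc (Suc (3*q)). length (ws j)) = q*m + (L+r)"
        using sumq[of q] len0[of q] len1[of q] by (simp only: sum.lessThan_Suc)
      have "c (q*m + (L+r) + t) = ws (Suc (Suc (3*q))) ! t" unfolding c_def
        using concat_inf_at[OF wsne, of t "Suc (Suc (3*q))"] that len2 s2 by simp
      also have "\<dots> = zb (iv+t)" unfolding ws_def using that md2 by simp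
      finally show ?thesis .
    qed
    define K where "K = L div (n+1)"
    have dmK: "K*(n+1) + L mod (n+1) = L" "L mod (n+1) < n+1" unfolding K_def
      by (rule div_mult_mod_eq) simp
    have KL: "K*(n+1) \<le> L" and LK: "L \<le> K*(n+1) + n" using dmK by linarith+
    have m0: "m > 0" using mLr LN by simp
    have win: "\<exists>q p p'. p+n < L \<and> p'+n < L \<and> (\<forall>i\<le>n. c(q*m+p+i) = x'(q*m+p+i))
                 \<and> (\<forall>i\<le>n. c(q*m+(L+r)+p'+i) = x'(q*m+(L+r)+p'+i))"
    proof (rule ccontr)
      assume H: "\<not> ?thesis"
      have iK: "i*(n+1)+n < L" if "i < K" for i
      proof -
        have "(i+1)*(n+1) \<le> K*(n+1)" using that by (intro mult_right_mono) auto
        then show ?thesis using KL by simp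
      qed
      have "\<forall>q. \<exists>ofs. ofs + L \<le> m \<and> (\<forall>i. i < K \<longrightarrow> (\<exists>d\<le>n. c(q*m + ofs + i*(n+1) + d) \<noteq> x'(q*m + ofs + i*(n+1)+d)))"
      proof
        fix q
        show "\<exists>ofs. ofs + L \<le> m \<and> (\<forall>i. i < K \<longrightarrow> (\<exists>d\<le>n. c(q*m + ofs + i*(n+1) + d) \<noteq> x'(q*m + ofs + i*(n+1)+d)))"
        proof (cases "\<exists>p. p+n < L \<and> (\<forall>i\<le>n. c(q*m+p+i) = x'(q*m+p+i))")
          case True
          then have nV: "\<forall>p'. p'+n < L \<longrightarrow> \<not>(\<forall>i\<le>n. c(q*m+(L+r)+p'+i) = x'(q*m+(L+r)+p'+i))" using H by blast
          show ?thesis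
          proof (rule exI[of _ "L+r"], intro conjI allI impI)
            show "L + r + L \<le> m" using mLr by simp
            fix i assume "i < K"
            then show "\<exists>d\<le>n. c(q*m+(L+r)+i*(n+1)+d) \<noteq> x'(q*m+(L+r)+i*(n+1)+d)"
              using nV iK by auto
          qed
        next
          case False
          show ?thesis
          proof (rule exI[of _ 0], intro conjI allI impI)
            show "0 + L \<le> m" using mLr by simp
            fix i assume "i < K"
            then show "\<exists>d\<le>n. c(q*m+0+i*(n+1)+d) \<noteq> x'(q*m+0+i*(n+1)+d)"
              using False iK by auto
          qed
        qed
      qed
      then obtain off where off: "\<forall>q. off q + L \<le> m \<and> (\<forall>i. i < K \<longrightarrow> (\<exists>d\<le>n. c(q*m + off q + i*(n+1) + d) \<noteq> x'(q*m + off q + i*(n+1)+d)))"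
        by metis
      have cnt: "\<forall>Q. Q*K \<le> card {j. j < Q*m \<and> c j \<noteq> x' j}"
        using count_lemma[OF KL, of off m c x'] off by blast
      have "ereal (real K / real (2*m)) \<le> dbar c x'" by (rule density_bound[OF cnt m0])
      moreover have "dbar c x' < ereal \<epsilon>" using x'(2) unfolding c_def .
      moreover have "\<epsilon> \<le> real K / real (2*m)"
      proof -
        have "2*m \<le> 16*(K*(n+1))" using LK LN m3 by linarith
        then have "real (2*m) \<le> real (16*(K*(n+1)))" by (rule of_nat_mono)
        moreover have "real (16*(K*(n+1))) = 16 * (real K * (real n + 1))" by (simp add: algebra_simps)
        ultimately have "real m \<le> 8 * (real K * (real n + 1))" by simp
        then show ?thesis unfolding \<epsilon>_def using m0 by (simp add: field_simps)
      qed
      ultimately show False by (metis ereal_less_eq(3) leD order.strict_trans1)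
    qed
    then obtain q p p' where pp: "p+n < L" "p'+n < L"
      and w1: "\<forall>i\<le>n. c(q*m+p+i) = x'(q*m+p+i)"
      and w2: "\<forall>i\<le>n. c(q*m+(L+r)+p'+i) = x'(q*m+(L+r)+p'+i)" by blast
    define f where "f = (\<lambda>t. if p+n < t \<and> t < (L+r)+p' then x'(q*m+t) else c(q*m+t))"
    show "\<exists>f. (\<forall>s. s+n < m \<longrightarrow> map f [s..<s+(n+1)] \<in> lang X)
            \<and> (\<forall>t\<le>n. f t = a!t) \<and> (\<forall>t\<le>n. f (m-(n+1)+t) = b!t)"
    proof (intro exI conjI allI impI)
      fix s assume s: "s + n < m"
      show "map f [s..<s+(n+1)] \<in> lang X"
      proof (cases "s \<le> p")
        case True
        have "map f [s..<s+(n+1)] = map xa [ia+s..<ia+s+(n+1)]"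
        proof (rule map_shift_eq)
          fix t assume "t < n+1"
          then have "s+t < L" "\<not>(p+n < s+t)" using True pp by auto
          then show "f (s+t) = xa (ia+s+t)" unfolding f_def using cU[of "s+t" q] by (simp add: add.assoc)
        qed
        then show ?thesis using lang_of[OF xa(1), of "ia+s" "n+1"] by (simp only:)
      next
        case False
        show ?thesis
        proof (cases "s \<le> L+r+p'")
          case True
          have "map f [s..<s+(n+1)] = map x' [q*m+s..<q*m+s+(n+1)]"
          proof (rule map_shift_eq)
            fix t assume t: "t < n+1"
            define u where "u = s+t"
            have "f u = x' (q*m+u)"
            proof (cases "p+n < u \<and> u < (L+r)+p'")
              case True then show ?thesis unfolding f_def by simp
            next
              case c2: False
              then have fu: "f u = c(q*m+u)" unfolding f_def by auto
              show ?thesis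
              proof (cases "u \<le> p+n")
                case True
                have "u-p \<le> n" "p + (u-p) = u" using True False unfolding u_def by auto
                then show ?thesis using fu w1[rule_format, of "u-p"] by (simp add: add.assoc)
              next
                case c3: False
                then have "u - (L+r) - p' \<le> n" "(L+r) + p' + (u - (L+r) - p') = u"
                  using c2 t True unfolding u_def by auto
                then show ?thesis using fu w2[rule_format, of "u - (L+r) - p'"] by (metis add.assoc)
              qed
            qed
            then show "f (s+t) = x' (q*m+s+t)" unfolding u_def by (simp add: add.assoc)
          qed
          then show ?thesis using lang_of[OF x'(1), of "q*m+s" "n+1"] by (simp only:)
        next
          case c4: False
          have "map f [s..<s+(n+1)] = map zb [iv+(s-(L+r))..<iv+(s-(L+r))+(n+1)]"
          proof (rule map_shift_eq)
            fix t assume t: "t < n+1"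
            have e: "s+t = (L+r) + (s - (L+r) + t)" "s - (L+r) + t < L" using c4 t s mLr by auto
            have "f (s+t) = c(q*m+(s+t))" unfolding f_def using c4 by auto
            also have "\<dots> = c(q*m+(L+r)+(s - (L+r) + t))" using e(1) by (metis add.assoc)
            also have "\<dots> = zb (iv + (s - (L+r) + t))" by (rule cV[OF e(2)])
            finally show "f (s+t) = zb (iv + (s-(L+r)) + t)" by (simp add: add.assoc)
          qed
          then show ?thesis using lang_of[OF zb(1), of "iv+(s-(L+r))" "n+1"] by (simp only:)
        qed
      qed
    next
      fix t assume t: "t \<le> n"
      then have "f t = c(q*m+t)" "t < L" unfolding f_def using pp by auto
      moreover have "a!t = xa (ia+t)" unfolding xa(2) using t by (simp add: nth_map_upt del: upt_Suc)
      ultimately show "f t = a!t" using cU[of t q] by simp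
    next
      fix t assume t: "t \<le> n"
      define u where "u = m-(n+1)+t"
      have e: "u = (L+r) + (L-(n+1)+t)" "L-(n+1)+t < L" "\<not> (u < (L+r)+p')" using t pp mLr unfolding u_def by auto
      have "f u = c(q*m+u)" unfolding f_def using e(3) by auto
      also have "\<dots> = c(q*m+(L+r)+(L-(n+1)+t))" using e(1) by (metis add.assoc)
      also have "\<dots> = zb (iv + (L-(n+1)+t))" by (rule cV[OF e(2)])
      also have "iv + (L-(n+1)+t) = L + (ib+t)" unfolding iv_def using pp by auto
      also have "zb (L + (ib+t)) = yb (ib+t)" using zb(2) by blast
      also have "\<dots> = b!t" unfolding yb(2) using t by (simp add: nth_map_upt del: upt_Suc)
      finally show "f (m-(n+1)+t) = b!t" unfolding u_def .
    qed
  qed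
qed

theorem mainTheorem6:
  fixes X :: "(nat \<Rightarrow> 'a::finite) set"
  assumes "shift_space X"
    and "dbar_shadowing X"
    and "shift ` X = X"
  shows "chain_mixing X"
  unfolding chain_mixing_def
proof (rule exI[of _ 0], intro allI impI)
  fix n :: nat
  have ne: "X \<noteq> {}" using assms(1) unfolding shift_space_def by blast
  let ?M = "markov_approx X n"
  have inM: "z \<in> ?M" if "\<And>s. map z [s..<s+(n+1)] \<in> lang X" for z
    unfolding markov_approx_def lang_n_def using that by simp
  have blk: "map z [s..<s+(n+1)] \<in> lang X" if "z \<in> ?M" for z s
    using that unfolding markov_approx_def lang_n_def by simp
  show "top_mixing ?M"
    unfolding top_mixing_def
  proof (intro ballI)
    fix u w assume u: "u \<in> lang ?M" and w: "w \<in> lang ?M"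
    obtain x i where x: "x \<in> ?M" "u = map x [i..<i+length u]" using lang_obtain[OF u] by metis
    obtain y i' where y: "y \<in> ?M" "w = map y [i'..<i'+length w]" using lang_obtain[OF w] by metis
    define lu where "lu = length u"
    define a where "a = map x [i+lu..<i+lu+(n+1)]"
    define b where "b = map y [i'..<i'+(n+1)]"
    have a: "a \<in> lang X" "length a = n+1" unfolding a_def using blk[OF x(1)] by auto
    have b: "b \<in> lang X" "length b = n+1" unfolding b_def using blk[OF y(1)] by auto
    have anth: "a!t = x(i+lu+t)" if "t \<le> n" for t unfolding a_def using that by (simp add: nth_map_upt del: upt_Suc)
    have bnth: "b!t = y(i'+t)" if "t \<le> n" for t unfolding b_def using that by (simp add: nth_map_upt del: upt_Suc)
    obtain M0 where M0: "\<forall>m\<ge>M0. \<exists>f. (\<forall>s. s+n < m \<longrightarrow> map f [s..<s+(n+1)] \<in> lang X)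
            \<and> (\<forall>t\<le>n. f t = a!t) \<and> (\<forall>t\<le>n. f (m-(n+1)+t) = b!t)"
      using path_lemma[OF assms(2,3) ne a b] by blast
    show "\<exists>N. \<forall>k\<ge>N. \<exists>v. length v = k \<and> u @ v @ w \<in> lang ?M"
    proof (rule exI[of _ M0], intro allI impI)
      fix k assume k: "M0 \<le> k"
      define m where "m = k + (n+1)"
      obtain f where fp: "\<forall>s. s+n < m \<longrightarrow> map f [s..<s+(n+1)] \<in> lang X"
        and fa: "\<forall>t\<le>n. f t = a!t" and fb: "\<forall>t\<le>n. f (m-(n+1)+t) = b!t"
      proof -
        have "m \<ge> M0" using k unfolding m_def by simp
        then show ?thesis using M0 that by blast
      qed
      have mk: "m - (n+1) = k" unfolding m_def by simp
      define z where "z = (\<lambda>t. if t < lu then x(i+t) else if t < lu + m then f(t - lu) else y(i' + (t - lu - k)))"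
      have zx: "z t = x (i+t)" if "t < lu + (n+1)" for t
      proof (cases "t < lu")
        case True then show ?thesis unfolding z_def by simp
      next
        case False
        then have "t - lu \<le> n" "t < lu + m" "i + lu + (t-lu) = i + t" using that unfolding m_def by auto
        then show ?thesis unfolding z_def using False fa anth by simp
      qed
      have zy: "z t = y (i' + (t - lu - k))" if "t \<ge> lu + k" for t
      proof (cases "t < lu + m")
        case True
        then have d: "t - lu - k \<le> n" "t - lu = m - (n+1) + (t - lu - k)" using that unfolding m_def by auto
        have "z t = f (t - lu)" unfolding z_def using True that by simp
        also have "\<dots> = b!(t-lu-k)" using fb d by metis
        finally show ?thesis using bnth[OF d(1)] by simp
      next
        case False then show ?thesis unfolding z_def by simp
      qed
      have zM: "z \<in> ?M"
      proof (rule inM)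
        fix s
        show "map z [s..<s+(n+1)] \<in> lang X"
        proof (cases "s < lu")
          case True
          have "map z [s..<s+(n+1)] = map x [i+s..<i+s+(n+1)]"
            by (rule map_shift_eq) (use True zx in \<open>simp add: add.assoc\<close>)
          then show ?thesis using blk[OF x(1), of "i+s"] by (simp only:)
        next
          case c1: False
          show ?thesis
          proof (cases "s + n < lu + m")
            case True
            have "map z [s..<s+(n+1)] = map f [s-lu..<s-lu+(n+1)]"
            proof (rule map_shift_eq)
              fix t assume "t < n+1"
              then show "z (s+t) = f (s-lu+t)" unfolding z_def using c1 True by auto
            qed
            moreover have "map f [s-lu..<s-lu+(n+1)] \<in> lang X"
            proof -
              have "s - lu + n < m" using True c1 by simp
              then show ?thesis using fp by blast
            qed
            ultimately show ?thesis by simp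
          next
            case False
            have "map z [s..<s+(n+1)] = map y [i'+(s-lu-k)..<i'+(s-lu-k)+(n+1)]"
            proof (rule map_shift_eq)
              fix t assume "t < n+1"
              have "s + t \<ge> lu + k" using False unfolding m_def by auto
              then have "z (s+t) = y (i' + (s + t - lu - k))" by (rule zy)
              also have "s + t - lu - k = (s - lu - k) + t" using False unfolding m_def by auto
              finally show "z (s+t) = y (i'+(s-lu-k)+t)" by (simp add: add.assoc)
            qed
            then show ?thesis using blk[OF y(1), of "i'+(s-lu-k)"] by (simp only:)
          qed
        qed
      qed
      define v where "v = map f [0..<k]"
      have "u @ v @ w = map z [0..<0 + length (u @ v @ w)]"
      proof (rule nth_equalityI)
        show "length (u @ v @ w) = length (map z [0..<0 + length (u @ v @ w)])" by simp
      next
        fix t assume "t < length (u @ v @ w)"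
        then have t: "t < lu + k + length w" unfolding v_def lu_def by simp
        have rhs: "map z [0..<0 + length (u @ v @ w)] ! t = z t"
          using t unfolding v_def lu_def by simp
        show "(u @ v @ w) ! t = map z [0..<0 + length (u @ v @ w)] ! t"
        proof -
          consider "t < lu" | "lu \<le> t" "t < lu + k" | "lu + k \<le> t" by linarith
          then show ?thesis
          proof cases
            case 1
            then have "(u @ v @ w) ! t = u ! t" unfolding lu_def by (simp add: nth_append)
            also have "\<dots> = map x [i..<i+lu] ! t" using arg_cong[of _ _ "\<lambda>l. l ! t", OF x(2)] unfolding lu_def .
            also have "\<dots> = x (i+t)" using 1 by (simp add: nth_map_upt del: upt_Suc)
            finally show ?thesis using rhs zx 1 by simp
          next
            case 2
            have lv: "length v = k" unfolding v_def by simp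
            have "(u @ v @ w) ! t = (v @ w) ! (t - lu)" using 2 unfolding lu_def by (simp add: nth_append)
            also have "\<dots> = v ! (t - lu)"
            proof -
              have "t - lu < length v" using 2 lv by linarith
              then show ?thesis by (rule nth_append_left)
            qed
            also have "\<dots> = f (t - lu)" using 2 unfolding v_def by simp
            also have "\<dots> = z t" unfolding z_def m_def using 2 by simp
            finally show ?thesis using rhs by simp
          next
            case 3
            have lv: "length v = k" unfolding v_def by simp
            have "(u @ v @ w) ! t = (v @ w) ! (t - lu)" using 3 unfolding lu_def by (intro nth_append_right) simp
            also have "\<dots> = w ! (t - lu - k)" using 3 lv by (subst nth_append_right) auto
            also have "\<dots> = map y [i'..<i'+length w] ! (t - lu - k)" using arg_cong[of _ _ "\<lambda>l. l ! (t - lu - k)", OF y(2)] .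
            also have "\<dots> = y (i' + (t - lu - k))" using 3 t by (simp add: nth_map_upt del: upt_Suc)
            also have "\<dots> = z t" using zy 3 by simp
            finally show ?thesis using rhs by simp
          qed
        qed
      qed
      then have "u @ v @ w \<in> lang ?M" unfolding lang_def using zM by (intro CollectI bexI[of _ z] exI[of _ 0])
      moreover have "length v = k" unfolding v_def by simp
      ultimately show "\<exists>v. length v = k \<and> u @ v @ w \<in> lang ?M" by blast
    qed
  qed
qed

end
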